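(* The generating function of the number of compositions of $n$ with parts in $\{1,2\}$ having at least one water cell is \[ \sum_{n \ge 0} \Bigl(\sum_{k \ge 1} w(n,k)\Bigr) q^n = \frac{q^5}{(1 - q)^2 (1 - q^2) (1 - q - q^2)}. \]
   Context: A composition of $n \ge 0$ is a finite sequence $(c_1,\dots,c_t)$ of positive integers with $c_1+\cdots+c_t=n$; the empty composition is the unique composition of $0$. Let $C_{12}(n)$ be the set of compositions of $n$ all of whose parts lie in $\{1,2\}$. The number of water cells of a composition $(c_1,\dots,c_t)$ is $\sum_{i=1}^{t} \max\bigl(0, \min(\max_{j \le i} c_j, \max_{j \ge i} c_j) - c_i\bigr)$ (the number of unit squares that would hold water poured over its bargraph, in which column $i$ has height $c_i$). For $n,k \ge 0$, $W(n,k)$ is the set of compositions in $C_{12}(n)$ with exactly $k$ water cells and $w(n,k)=|W(n,k)|$. *)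

theory Defs
  imports "HOL-Computational_Algebra.Formal_Power_Series" "HOL-Analysis.Infinite_Sum"
begin

definition C12 :: "nat \<Rightarrow> nat list set" where
  "C12 n = {cs. set cs \<subseteq> {1, 2} \<and> sum_list cs = n}"

text \<open>Number of water cells; column i (0-based) holds
  max 0 (min (max of c_0..c_i) (max of c_i..c_(t-1)) - c_i); nat subtraction truncates at 0.\<close>
definition water :: "nat list \<Rightarrow> nat" where
  "water cs = (\<Sum>i<length cs.
      min (Max (set (take (Suc i) cs))) (Max (set (drop i cs))) - cs ! i)"

definition W :: "nat \<Rightarrow> nat \<Rightarrow> nat list set" where
  "W n k = {cs \<in> C12 n. water cs = k}"

definition w :: "nat \<Rightarrow> nat \<Rightarrow> nat" where
  "w n k = card (W n k)"

end

theory Submission imports Defs begin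

definition sufw :: "nat list \<Rightarrow> nat" where
  "sufw xs = (\<Sum>i<length xs. Max (set (drop i xs)) - xs ! i)"

lemma Max_ge1: "set (xs::nat list) \<subseteq> {1,2} \<Longrightarrow> xs \<noteq> [] \<Longrightarrow> Max (set xs) \<ge> 1 \<and> Max (set xs) \<le> 2"
proof -
  assume a: "set xs \<subseteq> {1,2}" "xs \<noteq> []"
  then have h: "hd xs \<in> set xs" by simp
  then have "hd xs \<in> {1,2}" using a by blast
  then have "hd xs \<ge> 1" by auto
  then have "1 \<le> Max (set xs)" using h by (meson List.finite_set Max_ge order_trans)
  moreover have "Max (set xs) \<le> 2" using a by (subst Max_le_iff) auto
  ultimately show ?thesis by simp
qed

lemma water_1: assumes "set xs \<subseteq> {1,2}" shows "water (1#xs) = water xs"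
proof -
  have "water (1#xs) = (\<Sum>i<Suc (length xs).
      min (Max (set (take (Suc i) (1#xs)))) (Max (set (drop i (1#xs)))) - (1#xs) ! i)"
    by (simp add: water_def)
  also have "\<dots> = (\<Sum>i<length xs.
      min (Max (set (take (Suc (Suc i)) (1#xs)))) (Max (set (drop (Suc i) (1#xs)))) - (1#xs) ! Suc i)"
    by (subst sum.lessThan_Suc_shift) simp
  also have "\<dots> = water xs" unfolding water_def
  proof (rule sum.cong[OF refl])
    fix i assume i: "i \<in> {..<length xs}"
    have ne: "take (Suc i) xs \<noteq> []" using i by (cases xs) auto
    have "set (take (Suc i) xs) \<subseteq> {1,2}" by (rule subset_trans[OF set_take_subset assms])
    then have m: "1 \<le> Max (set (take (Suc i) xs))" using Max_ge1 ne by simp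
    have "Max (set (take (Suc (Suc i)) (1#xs))) = Max (insert 1 (set (take (Suc i) xs)))"
      by simp
    also have "\<dots> = max 1 (Max (set (take (Suc i) xs)))"
      using ne by (intro Max_insert) auto
    also have "\<dots> = Max (set (take (Suc i) xs))" using m by simp
    finally have e: "Max (set (take (Suc (Suc i)) (1#xs))) = Max (set (take (Suc i) xs))" .
    show "min (Max (set (take (Suc (Suc i)) (1#xs)))) (Max (set (drop (Suc i) (1#xs)))) - (1#xs) ! Suc i
       = min (Max (set (take (Suc i) xs))) (Max (set (drop i xs))) - xs ! i"
      by (simp only: e drop_Suc_Cons nth_Cons_Suc)
  qed
  finally show ?thesis .
qed

lemma water_2: assumes "set xs \<subseteq> {1,2}" shows "water (2#xs) = sufw xs"
proof -
  have "water (2#xs) = (\<Sum>i<Suc (length xs).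
      min (Max (set (take (Suc i) (2#xs)))) (Max (set (drop i (2#xs)))) - (2#xs) ! i)"
    by (simp add: water_def)
  also have "\<dots> = (\<Sum>i<length xs.
      min (Max (set (take (Suc (Suc i)) (2#xs)))) (Max (set (drop (Suc i) (2#xs)))) - (2#xs) ! Suc i)"
    by (subst sum.lessThan_Suc_shift) simp
  also have "\<dots> = sufw xs" unfolding sufw_def
  proof (rule sum.cong[OF refl])
    fix i assume i: "i \<in> {..<length xs}"
    have ne: "take (Suc i) xs \<noteq> []" "drop i xs \<noteq> []" using i by (cases xs; auto)+
    have "set (take (Suc i) xs) \<subseteq> {1,2}" by (rule subset_trans[OF set_take_subset assms])
    then have m: "Max (set (take (Suc i) xs)) \<le> 2" using Max_ge1 ne by simp
    have "Max (set (take (Suc (Suc i)) (2#xs))) = Max (insert 2 (set (take (Suc i) xs)))"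
      by simp
    also have "\<dots> = max 2 (Max (set (take (Suc i) xs)))"
      using ne by (intro Max_insert) auto
    also have "\<dots> = 2" using m by simp
    finally have e: "Max (set (take (Suc (Suc i)) (2#xs))) = 2" .
    have "set (drop i xs) \<subseteq> {1,2}" by (rule subset_trans[OF set_drop_subset assms])
    then have m2: "Max (set (drop i xs)) \<le> 2" using Max_ge1 ne by simp
    have "min (Max (set (take (Suc (Suc i)) (2#xs)))) (Max (set (drop (Suc i) (2#xs)))) - (2#xs) ! Suc i
       = min 2 (Max (set (drop i xs))) - xs ! i"
      by (simp only: e drop_Suc_Cons nth_Cons_Suc)
    also have "\<dots> = Max (set (drop i xs)) - xs ! i" using m2 by (simp add: min_def)
    finally show "min (Max (set (take (Suc (Suc i)) (2#xs)))) (Max (set (drop (Suc i) (2#xs)))) - (2#xs) ! Suc i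
       = Max (set (drop i xs)) - xs ! i" .
  qed
  finally show ?thesis .
qed

lemma sufw_2: assumes "set xs \<subseteq> {1,2}" shows "sufw (2#xs) = sufw xs"
proof -
  have "sufw (2#xs) = (Max (set (2#xs)) - 2) + sufw xs"
    unfolding sufw_def length_Cons by (subst sum.lessThan_Suc_shift) simp
  moreover have "Max (set (2#xs)) = 2" using assms by (intro Max_eqI) auto
  ultimately show ?thesis by simp
qed

lemma sufw_1: assumes "set xs \<subseteq> {1,2}" shows "sufw (1#xs) = (if 2 \<in> set xs then 1 else 0) + sufw xs"
proof -
  have "sufw (1#xs) = (Max (set (1#xs)) - 1) + sufw xs"
    unfolding sufw_def length_Cons by (subst sum.lessThan_Suc_shift) simp
  moreover have "Max (set (1#xs)) = (if 2 \<in> set xs then 2 else 1)"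
  proof (cases "2 \<in> set xs")
    case True
    then show ?thesis using assms by (intro Max_eqI) auto
  next
    case False
    then show ?thesis using assms by (intro Max_eqI) auto
  qed
  ultimately show ?thesis by simp
qed

lemma sufw_no2: "set xs \<subseteq> {1,2} \<Longrightarrow> 2 \<notin> set xs \<Longrightarrow> sufw xs = 0"
proof (induction xs)
  case (Cons x xs)
  then show ?case using sufw_1[of xs] by auto
qed (simp add: sufw_def)

lemma water_le: "set xs \<subseteq> {1,2} \<Longrightarrow> water xs \<le> length xs"
proof (induction xs)
  case Nil then show ?case by (simp add: water_def)
next
  case (Cons x xs)
  have le: "sufw xs \<le> length xs" if "set xs \<subseteq> {1,2}" for xs using that
  proof (induction xs)
    case (Cons y ys) then show ?case using sufw_1[of ys] sufw_2[of ys] by auto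
  qed (simp add: sufw_def)
  from Cons show ?case using water_1[of xs] water_2[of xs] le[of xs] by auto
qed

lemma len_le_sum: "set xs \<subseteq> {1,2::nat} \<Longrightarrow> length xs \<le> sum_list xs"
  by (induction xs) auto

lemma finite_C12: "finite (C12 n)"
proof -
  have "C12 n \<subseteq> {xs. set xs \<subseteq> {1,2} \<and> length xs \<le> n}"
    unfolding C12_def using len_le_sum by fastforce
  moreover have "finite {xs. set xs \<subseteq> {1,2::nat} \<and> length xs \<le> n}"
    by (rule finite_lists_length_le) simp
  ultimately show ?thesis by (rule finite_subset)
qed

lemma C12_0: "C12 0 = {[]}"
proof -
  have "set xs \<subseteq> {1,2} \<Longrightarrow> sum_list xs = 0 \<Longrightarrow> xs = []" for xs :: "nat list"
    by (cases xs) auto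
  then show ?thesis unfolding C12_def by auto
qed

lemma C12_Cons: "x # xs \<in> C12 n \<longleftrightarrow> x \<in> {1,2} \<and> x \<le> n \<and> xs \<in> C12 (n - x)"
  unfolding C12_def by auto

lemma C12_1: "C12 (Suc 0) = {[1]}"
proof
  show "C12 (Suc 0) \<subseteq> {[1]}"
  proof
    fix cs assume "cs \<in> C12 (Suc 0)"
    then show "cs \<in> {[1]}"
      by (cases cs) (auto simp: C12_Cons C12_0 simp del: One_nat_def, auto simp: C12_def)
  qed
qed (simp add: C12_def)

lemma C12_SS: "C12 (Suc (Suc n)) = Cons 1 ` C12 (Suc n) \<union> Cons 2 ` C12 n"
proof
  show "C12 (Suc (Suc n)) \<subseteq> Cons 1 ` C12 (Suc n) \<union> Cons 2 ` C12 n"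
  proof
    fix cs assume a: "cs \<in> C12 (Suc (Suc n))"
    then have "cs \<noteq> []" by (auto simp: C12_def)
    then obtain x xs where cs: "cs = x # xs" by (cases cs) auto
    with a show "cs \<in> Cons 1 ` C12 (Suc n) \<union> Cons 2 ` C12 n"
      by (auto simp: C12_Cons)
  qed
  show "Cons 1 ` C12 (Suc n) \<union> Cons 2 ` C12 n \<subseteq> C12 (Suc (Suc n))"
    by (auto simp: C12_Cons)
qed

definition cnt :: "(nat list \<Rightarrow> bool) \<Rightarrow> nat \<Rightarrow> nat" where
  "cnt P n = card {cs \<in> C12 n. P cs}"

lemma cnt_split: "cnt P (Suc (Suc n)) = cnt (\<lambda>xs. P (1#xs)) (Suc n) + cnt (\<lambda>xs. P (2#xs)) n"
proof -
  have "{cs \<in> C12 (Suc (Suc n)). P cs} =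
      Cons 1 ` {xs \<in> C12 (Suc n). P (1#xs)} \<union> Cons 2 ` {xs \<in> C12 n. P (2#xs)}"
    unfolding C12_SS by auto
  moreover have "finite (Cons 1 ` {xs \<in> C12 (Suc n). P (1#xs)})"
     "finite (Cons 2 ` {xs \<in> C12 n. P (2#xs)})" using finite_C12 by auto
  ultimately have "cnt P (Suc (Suc n)) = card (Cons 1 ` {xs \<in> C12 (Suc n). P (1#xs)})
      + card (Cons 2 ` {xs \<in> C12 n. P (2#xs)})"
    unfolding cnt_def by (simp only:) (rule card_Un_disjoint; auto)
  also have "\<dots> = cnt (\<lambda>xs. P (1#xs)) (Suc n) + cnt (\<lambda>xs. P (2#xs)) n"
    unfolding cnt_def by (simp add: card_image)
  finally show ?thesis .
qed

lemma cnt_cong: "(\<And>xs. xs \<in> C12 n \<Longrightarrow> P xs = Q xs) \<Longrightarrow> cnt P n = cnt Q n"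
  unfolding cnt_def by (metis (mono_tags, lifting) Collect_cong)

lemma C12_set: "xs \<in> C12 n \<Longrightarrow> set xs \<subseteq> {1,2}"
  by (simp add: C12_def)

abbreviation "Fc \<equiv> cnt (\<lambda>_. True)"
abbreviation "Ac \<equiv> cnt (\<lambda>xs. 2 \<in> set xs)"
abbreviation "Hc \<equiv> cnt (\<lambda>xs. sufw xs > 0)"
abbreviation "Gc \<equiv> cnt (\<lambda>xs. water xs > 0)"

lemma F_rec: "Fc 0 = 1" "Fc (Suc 0) = 1" "Fc (Suc (Suc n)) = Fc (Suc n) + Fc n"
  by (simp add: cnt_def C12_0, simp add: cnt_def C12_1, use cnt_split[of "\<lambda>_. True"] in simp)

lemma A_rec: "Ac 0 = 0" "Ac (Suc 0) = 0" "Ac (Suc (Suc n)) = Ac (Suc n) + Fc n"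
  by (simp add: cnt_def C12_0, simp add: cnt_def C12_1, use cnt_split[of "\<lambda>xs. 2 \<in> set xs"] in simp)

lemma H_rec: "Hc 0 = 0" "Hc (Suc 0) = 0" "Hc (Suc (Suc n)) = Hc n + Ac (Suc n)"
proof -
  show "Hc 0 = 0" by (simp add: cnt_def C12_0 sufw_def)
  show "Hc (Suc 0) = 0" by (simp add: cnt_def C12_1 sufw_def)
  have "Hc (Suc (Suc n)) = cnt (\<lambda>xs. sufw (1#xs) > 0) (Suc n) + cnt (\<lambda>xs. sufw (2#xs) > 0) n"
    by (rule cnt_split)
  also have "cnt (\<lambda>xs. sufw (1#xs) > 0) (Suc n) = Ac (Suc n)"
  proof (rule cnt_cong)
    fix xs assume "xs \<in> C12 (Suc n)" then have s: "set xs \<subseteq> {1,2}" by (rule C12_set)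
    show "(sufw (1#xs) > 0) = (2 \<in> set xs)" using sufw_1[OF s] sufw_no2[OF s] by auto
  qed
  also have "cnt (\<lambda>xs. sufw (2#xs) > 0) n = Hc n"
    by (rule cnt_cong) (use C12_set[of _ n] in \<open>auto simp: sufw_2\<close>)
  finally show "Hc (Suc (Suc n)) = Hc n + Ac (Suc n)" by simp
qed

lemma G_rec: "Gc 0 = 0" "Gc (Suc 0) = 0" "Gc (Suc (Suc n)) = Gc (Suc n) + Hc n"
proof -
  show "Gc 0 = 0" by (simp add: cnt_def C12_0 water_def)
  show "Gc (Suc 0) = 0" by (simp add: cnt_def C12_1 water_def)
  have "Gc (Suc (Suc n)) = cnt (\<lambda>xs. water (1#xs) > 0) (Suc n) + cnt (\<lambda>xs. water (2#xs) > 0) n"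
    by (rule cnt_split)
  also have "cnt (\<lambda>xs. water (1#xs) > 0) (Suc n) = Gc (Suc n)"
  proof (rule cnt_cong)
    fix xs assume "xs \<in> C12 (Suc n)" then have s: "set xs \<subseteq> {1,2}" by (rule C12_set)
    show "(water (1#xs) > 0) = (water xs > 0)" using water_1[OF s] by auto
  qed
  also have "cnt (\<lambda>xs. water (2#xs) > 0) n = Hc n"
    by (rule cnt_cong) (use C12_set[of _ n] in \<open>auto simp: water_2\<close>)
  finally show "Gc (Suc (Suc n)) = Gc (Suc n) + Hc n" by simp
qed

lemma A_closed: "Ac n + 1 = Fc n"
proof -
  have "Ac n + 1 = Fc n \<and> Ac (Suc n) + 1 = Fc (Suc n)"
    by (induction n) (simp_all add: A_rec F_rec)
  then show ?thesis by simp
qed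

lemma H_closed: "Hc n + n div 2 + 1 = Fc n"
proof -
  have "Hc n + n div 2 + 1 = Fc n \<and> Hc (Suc n) + Suc n div 2 + 1 = Fc (Suc n)"
  proof (induction n)
    case 0 then show ?case by (simp add: H_rec F_rec)
  next
    case (Suc n)
    have "Hc (Suc (Suc n)) + Suc (Suc n) div 2 + 1 = Hc n + n div 2 + 1 + (Ac (Suc n) + 1)"
      by (simp add: H_rec)
    also have "\<dots> = Fc (Suc (Suc n))" using Suc A_closed[of "Suc n"] by (simp add: F_rec)
    finally show ?case using Suc by simp
  qed
  then show ?thesis by simp
qed

lemma infsum_w: "(\<Sum>\<^sub>\<infinity>k\<in>{1..}. real (w n k)) = real (Gc n)"
proof -
  have z: "w n k = 0" if "k > n" for k
  proof -
    have "W n k = {}"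
    proof (rule ccontr)
      assume "W n k \<noteq> {}"
      then obtain cs where "cs \<in> C12 n" "water cs = k" unfolding W_def by auto
      then have "water cs \<le> length cs" "length cs \<le> n"
        using water_le len_le_sum by (auto simp: C12_def)
      then show False using that \<open>water cs = k\<close> by simp
    qed
    then show ?thesis by (simp add: w_def)
  qed
  have "(\<Sum>\<^sub>\<infinity>k\<in>{1..}. real (w n k)) = (\<Sum>\<^sub>\<infinity>k\<in>{1..n}. real (w n k))"
    by (rule infsum_cong_neutral) (auto simp: z)
  also have "\<dots> = (\<Sum>k\<in>{1..n}. real (w n k))" by simp
  also have "\<dots> = real (\<Sum>k\<in>{1..n}. card (W n k))" by (simp add: w_def)
  also have "(\<Sum>k\<in>{1..n}. card (W n k)) = card (\<Union>k\<in>{1..n}. W n k)"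
    by (rule card_UN_disjoint[symmetric]) (auto simp: W_def intro: finite_subset[OF _ finite_C12])
  also have "(\<Union>k\<in>{1..n}. W n k) = {cs \<in> C12 n. water cs > 0}"
  proof -
    have "cs \<in> C12 n \<Longrightarrow> water cs \<le> n" for cs
      using water_le len_le_sum by (fastforce simp: C12_def)
    then show ?thesis unfolding W_def by force
  qed
  finally show ?thesis by (simp add: cnt_def)
qed

definition "Fb = Abs_fps (\<lambda>n. real (Fc n))"
definition "Eb = Abs_fps (\<lambda>n. real (n div 2 + 1))"
definition "Gb = Abs_fps (\<lambda>n. real (Gc n))"

lemma Fb_eq: "Fb * (1 - fps_X - fps_X^2) = 1"
proof -
  have "Fb * (1 - fps_X - fps_X^2) = Fb - fps_X^1 * Fb - fps_X^2 * Fb" by (simp add: algebra_simps)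
  also have "\<dots> = 1"
  proof (rule fps_ext)
    fix n
    show "fps_nth (Fb - fps_X^1 * Fb - fps_X^2 * Fb) n = fps_nth 1 n"
    proof (cases n)
      case 0 then show ?thesis by (simp add: Fb_def fps_X_power_mult_nth F_rec)
    next
      case (Suc m) then show ?thesis
        by (cases m) (simp_all add: Fb_def fps_X_power_mult_nth F_rec)
    qed
  qed
  finally show ?thesis .
qed

lemma Eb_eq: "Eb * ((1 - fps_X) * (1 - fps_X^2)) = 1"
proof -
  have "Eb * ((1 - fps_X) * (1 - fps_X^2)) = Eb - fps_X^1 * Eb - fps_X^2 * Eb + fps_X^3 * Eb"
    by (simp add: algebra_simps power2_eq_square power3_eq_cube)
  also have "\<dots> = 1"
  proof (rule fps_ext)
    fix n
    show "fps_nth (Eb - fps_X^1 * Eb - fps_X^2 * Eb + fps_X^3 * Eb) n = fps_nth 1 n"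
    proof (cases "n < 3")
      case True
      then have "n = 0 \<or> n = 1 \<or> n = 2" by auto
      then show ?thesis by (auto simp: Eb_def fps_X_power_mult_nth)
    next
      case False
      define m where "m = n - 3"
      have m: "n = m + 3" using False unfolding m_def by simp
      have "(m+3) div 2 + m div 2 = (m+2) div 2 + (m+1) div 2" by presburger
      then have "real ((m+3) div 2) + real (m div 2) = real ((m+2) div 2) + real ((m+1) div 2)"
        by (simp only: of_nat_add[symmetric])
      then show ?thesis using m by (simp add: Eb_def fps_X_power_mult_nth)
    qed
  qed
  finally show ?thesis .
qed

lemma Gb_eq: "Gb * (1 - fps_X) = fps_X^2 * (Fb - Eb)"
proof -
  have "Gb * (1 - fps_X) = Gb - fps_X^1 * Gb" by (simp add: algebra_simps)
  also have "\<dots> = fps_X^2 * (Fb - Eb)"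
  proof (rule fps_ext)
    fix n
    show "fps_nth (Gb - fps_X^1 * Gb) n = fps_nth (fps_X^2 * (Fb - Eb)) n"
    proof (cases n)
      case 0 then show ?thesis by (simp add: Gb_def fps_X_power_mult_nth G_rec)
    next
      case (Suc m) note Sm = Suc
      show ?thesis
      proof (cases m)
        case 0 then show ?thesis using Sm by (simp add: Gb_def fps_X_power_mult_nth G_rec)
      next
        case (Suc k)
        have "real (Fc k) = real (Hc k) + real (k div 2 + 1)"
          by (simp only: H_closed[of k, symmetric] add.assoc of_nat_add)
        then show ?thesis using Sm Suc
          by (simp add: Gb_def Fb_def Eb_def fps_X_power_mult_nth G_rec)
      qed
    qed
  qed
  finally show ?thesis .
qed

lemma gen: fixes G F E X2 a b c :: "'a::comm_ring_1"
  assumes "G*a = X2*(F - E)" "F*c = 1" "E*(a*b) = 1"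
  shows "G*(a^2*b*c) = X2*(a*b - c)"
proof -
  have "G*(a^2*b*c) = (G*a)*(a*b)*c" by (simp add: power2_eq_square mult_ac)
  also have "\<dots> = X2*((F*c)*(a*b) - (E*(a*b))*c)" unfolding assms(1) by (simp add: algebra_simps)
  also have "\<dots> = X2*(a*b - c)" unfolding assms(2,3) by simp
  finally show ?thesis .
qed
lemma x3: "(1 - fps_X) * (1 - fps_X^2) - (1 - fps_X - fps_X^2) = (fps_X^3 :: real fps)"
  by (simp add: algebra_simps power2_eq_square power3_eq_cube)

lemma Gb_D: "Gb * ((1 - fps_X) ^ 2 * (1 - fps_X ^ 2) * (1 - fps_X - fps_X ^ 2)) = fps_X ^ 5"
proof -
  have "Gb * ((1 - fps_X) ^ 2 * (1 - fps_X ^ 2) * (1 - fps_X - fps_X ^ 2))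
     = fps_X^2 * ((1 - fps_X) * (1 - fps_X^2) - (1 - fps_X - fps_X^2))"
    by (rule gen[OF Gb_eq Fb_eq Eb_eq])
  also have "\<dots> = fps_X^2 * fps_X^3" by (simp only: x3)
  also have "\<dots> = fps_X ^ 5" by (simp add: power_add[symmetric])
  finally show ?thesis .
qed

theorem mainTheorem7:
  shows "Abs_fps (\<lambda>n. (\<Sum>\<^sub>\<infinity>k\<in>{1..}. real (w n k))) =
    fps_X ^ 5 / ((1 - fps_X) ^ 2 * (1 - fps_X ^ 2) * (1 - fps_X - fps_X ^ 2))"
proof -
  let ?D = "(1 - fps_X) ^ 2 * (1 - fps_X ^ 2) * (1 - fps_X - fps_X ^ 2) :: real fps"
  have l: "Abs_fps (\<lambda>n. (\<Sum>\<^sub>\<infinity>k\<in>{1..}. real (w n k))) = Gb"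
    unfolding Gb_def by (rule arg_cong[where f=Abs_fps], rule ext, rule infsum_w)
  have d0: "fps_nth ?D 0 = 1" by (simp only: fps_mult_nth_0 power2_eq_square fps_sub_nth fps_one_nth fps_X_nth) simp
  have "?D \<noteq> 0"
  proof
    assume "?D = 0"
    then have "fps_nth ?D 0 = 0" by (simp only: fps_zero_nth)
    then show False using d0 by simp
  qed
  then have "(Gb * ?D) / ?D = Gb" by (rule fps_divide_times_eq)
  then have "fps_X ^ 5 / ?D = Gb" by (simp only: Gb_D)
  then show ?thesis by (simp only: l)
qed

end
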